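(* The tree $\widehat T_n$ output by PruneTree equals the smallest tree contained in $E_n$ that contains every $w\in E_n$ with $\mathsf{CanRmv}(w)=0$.
   Context: $A$ is a finite alphabet; strings $w=w_{-j}\cdots w_{-1}$ over $A$; $e$ is the empty string; $w\preceq w'$ means $w$ is a suffix of $w'$; $\mathrm{par}(w_{-j}\cdots w_{-1})=w_{-j+1}\cdots w_{-1}$. A tree is a set of strings containing $e$ and closed under $\mathrm{par}$; a leaf is an element that is the parent of no element. Data: for $\ell=1,\dots,L$ a sample $X_1^n(\ell)\in A^n$; $N_{j,\ell}(w)$ is the number of occurrences of $w$ as a block of consecutive symbols in $X_1^j(\ell)$; $\hat p_{n,\ell}(a|w)=N_{n,\ell}(wa)/N_{n-1,\ell}(w)$ when $\min_\ell N_{n-1,\ell}(w)>0$. Metrics $d_\ell$ on distributions over $A$, $d(q,q')=(d_\ell(q_\ell,q'_\ell))_\ell$, $\hat p_n(\cdot|w)=(\hat p_{n,\ell}(\cdot|w))_\ell$; confidence radii $\mathrm{conf}(w)\in[0,1]^L$; $\|v\|_{L,q}=(\frac1L\sum_\ell|v_\ell|^q)^{1/q}$; fixed $k,r\ge1$ and $c>1$. $E_n=\{w:\min_\ell N_{n-1,\ell}(w)>0\}$. For nonempty $w\in E_n$, $\mathsf{CanRmv}(w)=1$ iff for all $w',w''\in E_n$ with $w\preceq w'$ and $\mathrm{par}(w)\preceq w''$: $\|d(\hat p_n(\cdot|w'),\hat p_n(\cdot|w''))\|_{L,k}\le c\|\mathrm{conf}(w')\|_{L,r}+c\|\mathrm{conf}(w'')\|_{L,r}$;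 otherwise $0$. PruneTree: start with $\widehat T_n=E_n$ and all nodes unexamined; while $\widehat T_n$ has an unexamined leaf $w$ ($w\neq e$), remove $w$ from $\widehat T_n$ if $\mathsf{CanRmv}(w)=1$, and mark $w$ examined; output $\widehat T_n$. *)

theory Defs
  imports Complex_Main "HOL-Library.Sublist"
begin

text \<open>Strings over the alphabet 'a are lists; the string w_{-j} ... w_{-1} is the list
[w_{-j}, ..., w_{-1}] (oldest symbol first). 
The suffix relation w \<preceq> w' is Sublist.suffix w w', i.e. w' = u @ w.\<close>

definition par :: "'a list \<Rightarrow> 'a list" where
  "par w = tl w"

definition is_tree :: "'a list set \<Rightarrow> bool" where
  "is_tree T \<longleftrightarrow> [] \<in> T \<and> (\<forall>w\<in>T. w \<noteq> [] \<longrightarrow> par w \<in> T)"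

definition is_leaf :: "'a list set \<Rightarrow> 'a list \<Rightarrow> bool" where
  "is_leaf T w \<longleftrightarrow> w \<in> T \<and> (\<forall>u\<in>T. u \<noteq> [] \<longrightarrow> par u \<noteq> w)"

text \<open>Sample ell is X ell 1, ..., X ell n. occ_count X ell j w = N_{j,ell}(w): the number of
occurrences of w as a block of consecutive symbols in X ell 1 ... X ell j
(the empty string occurs j+1 times, once at each position i = 1..j+1).\<close>

definition occ_count :: "(nat \<Rightarrow> nat \<Rightarrow> 'a) \<Rightarrow> nat \<Rightarrow> nat \<Rightarrow> 'a list \<Rightarrow> nat" where
  "occ_count X l j w =
     card {i. 1 \<le> i \<and> i + length w \<le> j + 1 \<and> (\<forall>k<length w. X l (i + k) = w ! k)}"

definition E_set :: "(nat \<Rightarrow> nat \<Rightarrow> 'a) \<Rightarrow> nat \<Rightarrow> nat \<Rightarrow> 'a list set" where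
  "E_set X L n = {w. \<forall>l\<in>{1..L}. 0 < occ_count X l (n - 1) w}"

definition p_hat :: "(nat \<Rightarrow> nat \<Rightarrow> 'a) \<Rightarrow> nat \<Rightarrow> nat \<Rightarrow> 'a list \<Rightarrow> 'a \<Rightarrow> real" where
  "p_hat X n l w a = real (occ_count X l n (w @ [a])) / real (occ_count X l (n - 1) w)"

definition normLq :: "nat \<Rightarrow> real \<Rightarrow> (nat \<Rightarrow> real) \<Rightarrow> real" where
  "normLq L q v = ((1 / real L) * (\<Sum>l = 1..L. \<bar>v l\<bar> powr q)) powr (1 / q)"

definition is_distribution :: "('a::finite \<Rightarrow> real) \<Rightarrow> bool" where
  "is_distribution q \<longleftrightarrow> (\<forall>a. 0 \<le> q a) \<and> (\<Sum>a\<in>UNIV. q a) = 1"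

definition metric_on_distributions :: "(('a::finite \<Rightarrow> real) \<Rightarrow> ('a \<Rightarrow> real) \<Rightarrow> real) \<Rightarrow> bool" where
  "metric_on_distributions d \<longleftrightarrow>
     (\<forall>p q. is_distribution p \<longrightarrow> is_distribution q \<longrightarrow> 0 \<le> d p q \<and> d p q = d q p \<and> (d p q = 0 \<longleftrightarrow> p = q)) \<and>
     (\<forall>p q s. is_distribution p \<longrightarrow> is_distribution q \<longrightarrow> is_distribution s \<longrightarrow> d p s \<le> d p q + d q s)"

text \<open>CanRmv(w) = 1 is rendered as the boolean CanRmv ... w = True (meaningful for nonempty w in E_n).\<close>

definition CanRmv ::
  "(nat \<Rightarrow> nat \<Rightarrow> 'a) \<Rightarrow> nat \<Rightarrow> nat \<Rightarrow> (nat \<Rightarrow> ('a \<Rightarrow> real) \<Rightarrow> ('a \<Rightarrow> real) \<Rightarrow> real)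
   \<Rightarrow> ('a list \<Rightarrow> nat \<Rightarrow> real) \<Rightarrow> real \<Rightarrow> real \<Rightarrow> real \<Rightarrow> 'a list \<Rightarrow> bool" where
  "CanRmv X L n d conf k r c w \<longleftrightarrow>
     (\<forall>w'\<in>E_set X L n. \<forall>w''\<in>E_set X L n. suffix w w' \<longrightarrow> suffix (par w) w'' \<longrightarrow>
        normLq L k (\<lambda>l. d l (p_hat X n l w') (p_hat X n l w''))
          \<le> c * normLq L r (conf w') + c * normLq L r (conf w''))"

text \<open>One iteration of the (nondeterministic) while loop of PruneTree, on states
(current tree, set of examined nodes), for a removability predicate R.\<close>

definition prune_step :: "('a list \<Rightarrow> bool) \<Rightarrow> ('a list set \<times> 'a list set) \<Rightarrow> ('a list set \<times> 'a list set) \<Rightarrow> bool" where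
  "prune_step R s s' \<longleftrightarrow> (\<exists>w. w \<noteq> [] \<and> is_leaf (fst s) w \<and> w \<notin> snd s \<and>
      s' = ((if R w then fst s - {w} else fst s), insert w (snd s)))"

definition prune_final :: "('a list set \<times> 'a list set) \<Rightarrow> bool" where
  "prune_final s \<longleftrightarrow> \<not> (\<exists>w. w \<noteq> [] \<and> is_leaf (fst s) w \<and> w \<notin> snd s)"

end

theory Submission
  imports Defs
begin

lemma occ_pos:
  "0 < occ_count X l j w \<longleftrightarrow> (\<exists>i. 1 \<le> i \<and> i + length w \<le> j + 1 \<and> (\<forall>k<length w. X l (i + k) = w ! k))"
proof -
  have "finite {i. 1 \<le> i \<and> i + length w \<le> j + 1 \<and> (\<forall>k<length w. X l (i + k) = w ! k)}"
    by (rule finite_subset[of _ "{..j+1}"]) auto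
  then show ?thesis unfolding occ_count_def by (auto simp: card_gt_0_iff)
qed

lemma E_nil: "1 \<le> n \<Longrightarrow> [] \<in> E_set X L n"
  unfolding E_set_def occ_pos by auto

lemma E_tl: assumes "w \<in> E_set X L n" shows "tl w \<in> E_set X L n"
proof (cases w)
  case Nil then show ?thesis using assms by simp
next
  case (Cons a w')
  show ?thesis unfolding E_set_def occ_pos mem_Collect_eq
  proof
    fix l assume "l \<in> {1..L}"
    with assms obtain i where i: "1 \<le> i" "i + length w \<le> n - 1 + 1" "\<forall>k<length w. X l (i + k) = w ! k"
      unfolding E_set_def occ_pos by blast
    show "\<exists>i. 1 \<le> i \<and> i + length (tl w) \<le> n - 1 + 1 \<and> (\<forall>k<length (tl w). X l (i + k) = tl w ! k)"
    proof (intro exI[of _ "i+1"] conjI allI impI)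
      show "1 \<le> i + 1" by simp
      show "i + 1 + length (tl w) \<le> n - 1 + 1" using i Cons by simp
      fix k assume "k < length (tl w)"
      then have "Suc k < length w" using Cons by simp
      then have "X l (i + Suc k) = w ! Suc k" using i(3) by blast
      then show "X l (i + 1 + k) = tl w ! k" using Cons by simp
    qed
  qed
qed

lemma E_len: assumes "1 \<le> L" "1 \<le> n" "w \<in> E_set X L n" shows "length w < n"
proof -
  from assms obtain i where "1 \<le> i" "i + length w \<le> n - 1 + 1"
    unfolding E_set_def occ_pos by fastforce
  then show ?thesis using assms(2) by linarith
qed

lemma E_fin: assumes "1 \<le> L" "1 \<le> n" shows "finite (E_set X L n :: 'a::finite list set)"
proof (rule finite_subset)
  show "E_set X L n \<subseteq> {xs. set xs \<subseteq> UNIV \<and> length xs \<le> n}"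
    using E_len[OF assms] by (fastforce simp: less_imp_le)
  show "finite {xs::'a list. set xs \<subseteq> UNIV \<and> length xs \<le> n}"
    by (rule finite_lists_length_le) simp
qed

definition inv where
  "inv E R T Xs \<longleftrightarrow> is_tree T \<and> T \<subseteq> E \<and> Xs \<subseteq> E \<and> {w \<in> E. w \<noteq> [] \<and> \<not> R w} \<subseteq> T
     \<and> (\<forall>x\<in>Xs. x \<in> T \<longrightarrow> \<not> R x)"

lemma inv_step:
  assumes "prune_step R (T, Xs) (T', Xs')" "inv E R T Xs"
  shows "inv E R T' Xs'"
proof -
  from assms(1) obtain w where w: "w \<noteq> []" "is_leaf T w" "w \<notin> Xs"
    and s: "T' = (if R w then T - {w} else T)" "Xs' = insert w Xs"
    unfolding prune_step_def by auto
  have tr: "is_tree T'"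
    using assms(2) w s unfolding inv_def is_tree_def is_leaf_def by auto
  show ?thesis using tr assms(2) w s unfolding inv_def is_leaf_def by auto
qed

lemma inv_reach:
  assumes "(prune_step R)\<^sup>*\<^sup>* s0 s" "inv E R (fst s0) (snd s0)"
  shows "inv E R (fst s) (snd s)"
  using assms
proof (induction rule: rtranclp_induct)
  case base then show ?case by simp
next
  case (step y z)
  then show ?case using inv_step[of R "fst y" "snd y" "fst z" "snd z"] by auto
qed

lemma exists_final:
  assumes "finite E"
  shows "T \<subseteq> E \<Longrightarrow> Xs \<subseteq> E \<Longrightarrow> \<exists>T' Xs'. (prune_step R)\<^sup>*\<^sup>* (T, Xs) (T', Xs') \<and> prune_final (T', Xs')"
proof (induction "card (E - Xs)" arbitrary: T Xs rule: less_induct)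
  case less
  show ?case
  proof (cases "prune_final (T, Xs)")
    case True then show ?thesis by blast
  next
    case False
    then obtain w where w: "w \<noteq> []" "is_leaf T w" "w \<notin> Xs"
      unfolding prune_final_def by auto
    define T1 where "T1 = (if R w then T - {w} else T)"
    have st: "prune_step R (T, Xs) (T1, insert w Xs)"
      unfolding prune_step_def T1_def using w by auto
    have wE: "w \<in> E" using w less.prems unfolding is_leaf_def by auto
    have "card (E - insert w Xs) < card (E - Xs)"
      using wE w(3) assms by (intro psubset_card_mono) auto
    moreover have "T1 \<subseteq> E" "insert w Xs \<subseteq> E" using less.prems wE T1_def by auto
    ultimately obtain T' Xs' where "(prune_step R)\<^sup>*\<^sup>* (T1, insert w Xs) (T', Xs')" "prune_final (T', Xs')"
      using less.hyps by blast
    then show ?thesis using st by (meson converse_rtranclp_into_rtranclp)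
  qed
qed

theorem propositionA1:
  fixes X :: "nat \<Rightarrow> nat \<Rightarrow> 'a::finite"
    and L n :: nat
    and d :: "nat \<Rightarrow> ('a \<Rightarrow> real) \<Rightarrow> ('a \<Rightarrow> real) \<Rightarrow> real"
    and conf :: "'a list \<Rightarrow> nat \<Rightarrow> real"
    and k r c :: real
  assumes "1 \<le> L" and "1 \<le> n"
    and "\<And>l. l \<in> {1..L} \<Longrightarrow> metric_on_distributions (d l)"
    and "\<And>w l. l \<in> {1..L} \<Longrightarrow> 0 \<le> conf w l \<and> conf w l \<le> 1"
    and "1 \<le> k" and "1 \<le> r" and "1 < c"
  defines "E \<equiv> E_set X L n"
    and "R \<equiv> CanRmv X L n d conf k r c"
  shows "(\<exists>T Ex. (prune_step R)\<^sup>*\<^sup>* (E, {}) (T, Ex) \<and> prune_final (T, Ex))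
     \<and> (\<forall>T Ex. (prune_step R)\<^sup>*\<^sup>* (E, {}) (T, Ex) \<and> prune_final (T, Ex) \<longrightarrow>
          is_tree T \<and> T \<subseteq> E \<and> {w \<in> E. w \<noteq> [] \<and> \<not> R w} \<subseteq> T \<and>
          (\<forall>T'. is_tree T' \<and> T' \<subseteq> E \<and> {w \<in> E. w \<noteq> [] \<and> \<not> R w} \<subseteq> T' \<longrightarrow> T \<subseteq> T'))"
proof
  have finE: "finite E" unfolding E_def using E_fin[OF assms(1,2)] .
  show "\<exists>T Ex. (prune_step R)\<^sup>*\<^sup>* (E, {}) (T, Ex) \<and> prune_final (T, Ex)"
    using exists_final[OF finE, of E "{}"] by auto
  have treeE: "is_tree E" unfolding is_tree_def par_def E_def
    using E_nil[OF assms(2)] E_tl by blast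
  have inv0: "inv E R E {}" using treeE unfolding inv_def by auto
  show "\<forall>T Ex. (prune_step R)\<^sup>*\<^sup>* (E, {}) (T, Ex) \<and> prune_final (T, Ex) \<longrightarrow>
          is_tree T \<and> T \<subseteq> E \<and> {w \<in> E. w \<noteq> [] \<and> \<not> R w} \<subseteq> T \<and>
          (\<forall>T'. is_tree T' \<and> T' \<subseteq> E \<and> {w \<in> E. w \<noteq> [] \<and> \<not> R w} \<subseteq> T' \<longrightarrow> T \<subseteq> T')"
  proof (intro allI impI)
    fix T Ex assume h: "(prune_step R)\<^sup>*\<^sup>* (E, {}) (T, Ex) \<and> prune_final (T, Ex)"
    have I: "inv E R T Ex" using inv_reach[of R "(E, {})" "(T, Ex)" E] h inv0 by auto
    have fin: "prune_final (T, Ex)" using h by blast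
    show "is_tree T \<and> T \<subseteq> E \<and> {w \<in> E. w \<noteq> [] \<and> \<not> R w} \<subseteq> T \<and>
          (\<forall>T'. is_tree T' \<and> T' \<subseteq> E \<and> {w \<in> E. w \<noteq> [] \<and> \<not> R w} \<subseteq> T' \<longrightarrow> T \<subseteq> T')"
    proof (intro conjI allI impI)
      show "is_tree T" "T \<subseteq> E" "{w \<in> E. w \<noteq> [] \<and> \<not> R w} \<subseteq> T" using I unfolding inv_def by auto
      fix T' assume T': "is_tree T' \<and> T' \<subseteq> E \<and> {w \<in> E. w \<noteq> [] \<and> \<not> R w} \<subseteq> T'"
      have "u \<in> T \<Longrightarrow> u \<in> T'" for u
      proof (induction "n - length u" arbitrary: u rule: less_induct)
        case less
        show ?case
        proof (cases "u = []")
          case True then show ?thesis using T' unfolding is_tree_def by auto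
        next
          case False
          show ?thesis
          proof (cases "is_leaf T u")
            case True
            then have "u \<in> Ex" using fin False unfolding prune_final_def by auto
            then have "\<not> R u" using I less.prems unfolding inv_def by auto
            moreover have "u \<in> E" using I less.prems unfolding inv_def by auto
            ultimately show ?thesis using T' False by auto
          next
            case nl: False
            then obtain v where v: "v \<in> T" "v \<noteq> []" "par v = u"
              using less.prems unfolding is_leaf_def by auto
            have "v \<in> E" using I v unfolding inv_def by auto
            then have "length v < n" using E_len[OF assms(1,2)] unfolding E_def by blast
            moreover have "length v = Suc (length u)" using v unfolding par_def by (cases v) auto
            ultimately have "n - length v < n - length u" by simp
            then have "v \<in> T'" using less.hyps v by blast
            then show ?thesis using T' v unfolding is_tree_def by auto
          qed
        qed
      qed
      then show "T \<subseteq> T'" by blast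
    qed
  qed
qed

end
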